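(* Fix a prime power $q$ and real numbers $0\le\rho'\le r'\le 1/2$ with $r'>0$. Define $$k_{\mathrm{C}}(r',\rho') = \liminf_{n\to\infty}\frac{\log_q K_{\mathrm{C}}(q,n,\lfloor r'n\rfloor,\lfloor\rho'n\rfloor)}{\log_q{n\brack \lfloor r'n\rfloor}}.$$ Then $k_{\mathrm{C}}(r',\rho') = 1 - \frac{\rho'(1-\rho')}{r'(1-r')}$.
   Context: ${m\brack k}=\prod_{i=0}^{k-1}\frac{q^m-q^i}{q^k-q^i}$ is the Gaussian binomial. $E_r(q,n)$ is the set of $r$-dimensional subspaces of $\mathrm{GF}(q)^n$ with injection distance $d_{\mathrm{I}}(U,V)=\dim(U+V)-\min\{\dim U,\dim V\}$; the covering radius of a nonempty $\mathcal{C}\subseteq E_r(q,n)$ is $\max_U\min_{C\in\mathcal{C}}d_{\mathrm{I}}(U,C)$, and $K_{\mathrm{C}}(q,n,r,\rho)$ is the minimum cardinality of a subset of $E_r(q,n)$ with covering radius at most $\rho$. *)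

theory Defs
  imports "HOL-Analysis.Analysis" "HOL-Library.Liminf_Limsup" "HOL-Library.Function_Algebras"
begin

text \<open>Vectors of GF(q)^n are modelled as functions nat => 'a vanishing from index n on,
  where 'a is a finite field (of order q = CARD('a)).\<close>

definition fscale :: "'a::field \<Rightarrow> (nat \<Rightarrow> 'a) \<Rightarrow> (nat \<Rightarrow> 'a)" where
  "fscale c v = (\<lambda>i. c * v i)"

definition Vn :: "nat \<Rightarrow> (nat \<Rightarrow> 'a::field) set" where
  "Vn n = {v. \<forall>i\<ge>n. v i = 0}"

definition sdim :: "(nat \<Rightarrow> 'a::field) set \<Rightarrow> nat" where
  "sdim U = vector_space.dim fscale U"

definition Er :: "nat \<Rightarrow> nat \<Rightarrow> (nat \<Rightarrow> 'a::{field,finite}) set set" where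
  "Er n r = {U. module.subspace fscale U \<and> U \<subseteq> Vn n \<and> sdim U = r}"

definition dI :: "(nat \<Rightarrow> 'a::field) set \<Rightarrow> (nat \<Rightarrow> 'a) set \<Rightarrow> nat" where
  "dI U V = sdim (module.span fscale (U \<union> V)) - min (sdim U) (sdim V)"

definition covrad :: "nat \<Rightarrow> nat \<Rightarrow> (nat \<Rightarrow> 'a::{field,finite}) set set \<Rightarrow> nat" where
  "covrad n r Cs = Max ((\<lambda>U. Min ((\<lambda>C. dI U C) ` Cs)) ` Er n r)"

definition KC :: "'a::{field,finite} itself \<Rightarrow> nat \<Rightarrow> nat \<Rightarrow> nat \<Rightarrow> nat" where
  "KC _ n r \<rho> = (LEAST m. \<exists>Cs::(nat \<Rightarrow> 'a) set set.
      Cs \<subseteq> Er n r \<and> Cs \<noteq> {} \<and> covrad n r Cs \<le> \<rho> \<and> card Cs = m)"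

definition gauss_binom :: "nat \<Rightarrow> nat \<Rightarrow> nat \<Rightarrow> real" where
  "gauss_binom q m k = (\<Prod>i<k. (real q ^ m - real q ^ i) / (real q ^ k - real q ^ i))"

end

theory Submission
  imports Defs
begin


interpretation V: vector_space "fscale :: 'a::field \<Rightarrow> (nat \<Rightarrow> 'a) \<Rightarrow> (nat \<Rightarrow> 'a)"
  by unfold_locales (auto simp: fscale_def fun_eq_iff algebra_simps)

lemma sdim_eq: "sdim U = V.dim U" by (simp add: sdim_def)

lemma card_ge2: "CARD('a::{field,finite}) \<ge> 2"
proof -
  have "{0::'a, 1} \<subseteq> UNIV" by auto
  hence "card {0::'a,1} \<le> CARD('a)" by (intro card_mono) auto
  thus ?thesis by simp
qed

lemma card_span:
  fixes B :: "(nat \<Rightarrow> 'a::{field,finite}) set"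
  assumes fin: "finite B" and ind: "V.independent B"
  shows "card (V.span B) = CARD('a) ^ card B"
proof -
  let ?f = "\<lambda>c. \<Sum>b\<in>B. fscale (c b) b"
  let ?P = "PiE B (\<lambda>_. (UNIV::'a set))"
  have inj: "inj_on ?f ?P"
  proof (rule inj_onI)
    fix c d assume c: "c \<in> ?P" and d: "d \<in> ?P" and eq: "?f c = ?f d"
    have "(\<Sum>b\<in>B. fscale (c b - d b) b) = ?f c - ?f d"
      by (simp add: V.scale_left_diff_distrib sum_subtractf)
    hence z: "(\<Sum>b\<in>B. fscale (c b - d b) b) = 0" using eq by simp
    show "c = d"
    proof
      fix x show "c x = d x"
      proof (cases "x \<in> B")
        case True
        from V.independentD[OF ind fin subset_refl z True] show ?thesis by simp
      next
        case False thus ?thesis using c d by (auto simp: PiE_def extensional_def)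
      qed
    qed
  qed
  have img: "?f ` ?P = V.span B"
  proof
    show "?f ` ?P \<subseteq> V.span B"
    proof (rule image_subsetI)
      fix c show "?f c \<in> V.span B"
        by (rule V.span_sum, rule V.span_scale, erule V.span_base)
    qed
    show "V.span B \<subseteq> ?f ` ?P"
    proof
      fix x assume "x \<in> V.span B"
      then obtain u where u: "x = (\<Sum>b\<in>B. fscale (u b) b)"
        using V.span_finite[OF fin] by auto
      let ?c = "restrict u B"
      have "?c \<in> ?P" by auto
      moreover have "?f ?c = x" using u by (auto intro!: sum.cong)
      ultimately show "x \<in> ?f ` ?P" by blast
    qed
  qed
  have "card (V.span B) = card ?P" using img card_image[OF inj] by simp
  also have "\<dots> = CARD('a) ^ card B" by (simp add: card_PiE fin)
  finally show ?thesis .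
qed

lemma card_subspace:
  fixes U :: "(nat \<Rightarrow> 'a::{field,finite}) set"
  assumes "V.subspace U" "finite U"
  shows "card U = CARD('a) ^ V.dim U"
proof -
  obtain B where B: "B \<subseteq> U" "V.independent B" "U \<subseteq> V.span B" "card B = V.dim U"
    using V.basis_exists by blast
  have "V.span B = U" using B assms V.span_minimal[of B U] by auto
  moreover have "finite B" using B assms finite_subset by auto
  ultimately show ?thesis using card_span B by metis
qed

lemma span_eq_of_card:
  fixes U :: "(nat \<Rightarrow> 'a::{field,finite}) set"
  assumes "V.subspace U" "finite U" "B \<subseteq> U" "V.independent B" "card B = V.dim U"
  shows "V.span B = U"
proof -
  have fB: "finite B" using assms finite_subset by auto
  have sub: "V.span B \<subseteq> U" using assms V.span_minimal by auto
  have "card (V.span B) = card U" using card_span[OF fB assms(4)] card_subspace[OF assms(1,2)] assms(5) by simp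
  thus ?thesis using card_subset_eq[OF assms(2) sub] by simp
qed

lemma Vn_subspace: "V.subspace (Vn n)"
  by (auto simp: Vn_def V.subspace_def fscale_def)

lemma Vn_card: "finite (Vn n :: (nat \<Rightarrow> 'a::{field,finite}) set) \<and> card (Vn n :: (nat \<Rightarrow> 'a) set) = CARD('a) ^ n"
proof -
  let ?g = "\<lambda>f::nat \<Rightarrow> 'a. \<lambda>i. if i < n then f i else 0"
  let ?P = "PiE {..<n} (\<lambda>_. (UNIV::'a set))"
  have inj: "inj_on ?g ?P"
  proof (rule inj_onI)
    fix f h assume f: "f \<in> ?P" and h: "h \<in> ?P" and e: "?g f = ?g h"
    show "f = h"
    proof
      fix i show "f i = h i"
      proof (cases "i < n")
        case True thus ?thesis using fun_cong[OF e, of i] by simp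
      next
        case False thus ?thesis using PiE_arb[OF f] PiE_arb[OF h] by simp
      qed
    qed
  qed
  have img: "?g ` ?P = Vn n"
  proof
    show "?g ` ?P \<subseteq> Vn n" unfolding Vn_def by (simp add: image_subset_iff)
    show "Vn n \<subseteq> ?g ` ?P"
    proof
      fix v :: "nat \<Rightarrow> 'a" assume "v \<in> Vn n"
      hence e: "v = ?g (restrict v {..<n})" by (auto simp: Vn_def fun_eq_iff)
      have m: "restrict v {..<n} \<in> ?P" by auto
      show "v \<in> ?g ` ?P" by (rule image_eqI[of v ?g "restrict v {..<n}", OF e m])
    qed
  qed
  have fP: "finite ?P" by (auto intro: finite_PiE)
  have cP: "card ?P = CARD('a) ^ n" by (simp add: card_PiE)
  have "finite (Vn n :: (nat \<Rightarrow> 'a) set)" using finite_imageI[OF fP, of ?g] unfolding img .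
  moreover have "card (Vn n :: (nat \<Rightarrow> 'a) set) = CARD('a) ^ n"
    using card_image[OF inj] cP unfolding img by (rule trans)
  ultimately show ?thesis by simp
qed



definition ext :: "(nat \<Rightarrow> 'a::field) set \<Rightarrow> (nat \<Rightarrow> 'a) set \<Rightarrow> nat \<Rightarrow> (nat \<Rightarrow> 'a) list set" where
  "ext X S k = {vs. length vs = k \<and> distinct vs \<and> set vs \<subseteq> X \<and> set vs \<inter> S = {} \<and> V.independent (S \<union> set vs)}"

definition PP :: "nat \<Rightarrow> nat \<Rightarrow> nat \<Rightarrow> nat \<Rightarrow> real" where
  "PP q m s k = (\<Prod>i<k. real q ^ m - real q ^ (s+i))"

definition Sub :: "(nat \<Rightarrow> 'a::field) set \<Rightarrow> (nat \<Rightarrow> 'a) set \<Rightarrow> nat \<Rightarrow> (nat \<Rightarrow> 'a) set set" where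
  "Sub X S r = {U. V.subspace U \<and> S \<subseteq> U \<and> U \<subseteq> X \<and> V.dim U = r}"

lemma ext_card_set:
  assumes "vs \<in> ext X S k" "finite S"
  shows "card (S \<union> set vs) = card S + k" "V.independent (S \<union> set vs)"
  using assms by (auto simp: ext_def card_Un_disjoint distinct_card inf_commute)

lemma ext_mono: "X \<subseteq> Y \<Longrightarrow> ext X S k \<subseteq> ext Y S k"
  by (auto simp: ext_def)

lemma ext_Suc: "ext X S (Suc k) = (\<lambda>(vs,v). v # vs) ` (SIGMA vs:ext X S k. X - V.span (S \<union> set vs))"
proof
  show "ext X S (Suc k) \<subseteq> (\<lambda>(vs,v). v # vs) ` (SIGMA vs:ext X S k. X - V.span (S \<union> set vs))"
  proof
    fix ws assume ws: "ws \<in> ext X S (Suc k)"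
    then obtain v vs where w: "ws = v # vs" by (cases ws) (auto simp: ext_def)
    have ind: "V.independent (insert v (S \<union> set vs))" using ws w by (auto simp: ext_def)
    have nv: "v \<notin> S \<union> set vs" using ws w by (auto simp: ext_def)
    have "vs \<in> ext X S k" using ws w V.independent_mono[OF ind] by (auto simp: ext_def)
    moreover have "v \<in> X - V.span (S \<union> set vs)" using ws w ind nv V.independent_insert[of v "S \<union> set vs"]
      by (auto simp: ext_def)
    ultimately show "ws \<in> (\<lambda>(vs,v). v # vs) ` (SIGMA vs:ext X S k. X - V.span (S \<union> set vs))"
      using w by force
  qed
  show "(\<lambda>(vs,v). v # vs) ` (SIGMA vs:ext X S k. X - V.span (S \<union> set vs)) \<subseteq> ext X S (Suc k)"
  proof clarify
    fix vs v assume vs: "vs \<in> ext X S k" and v: "v \<in> X" "v \<notin> V.span (S \<union> set vs)"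
    have nv: "v \<notin> S \<union> set vs" using v V.span_superset by blast
    have "V.independent (insert v (S \<union> set vs))"
      using V.independent_insertI[OF v(2)] vs by (auto simp: ext_def)
    thus "v # vs \<in> ext X S (Suc k)" using vs v nv by (auto simp: ext_def)
  qed
qed

lemma ext_finite: "finite X \<Longrightarrow> finite (ext X S k)"
  by (rule finite_subset[OF _ finite_lists_length_eq[of X k]]) (auto simp: ext_def)

lemma card_ext:
  fixes X :: "(nat \<Rightarrow> 'a::{field,finite}) set"
  assumes X: "V.subspace X" "finite X" "card X = CARD('a) ^ m"
    and S: "S \<subseteq> X" "V.independent S" and k: "card S + k \<le> m"
  shows "real (card (ext X S k)) = PP CARD('a) m (card S) k"
  using k
proof (induction k)
  case 0
  have "ext X S 0 = {[]}" using S by (auto simp: ext_def)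
  thus ?case by (simp add: PP_def)
next
  case (Suc k)
  have fS: "finite S" using S X finite_subset by auto
  have IH: "real (card (ext X S k)) = PP CARD('a) m (card S) k" using Suc by simp
  have inj: "inj_on (\<lambda>(vs,v). v # vs) (SIGMA vs:ext X S k. X - V.span (S \<union> set vs))"
    by (auto simp: inj_on_def)
  have fin: "finite (ext X S k)" using ext_finite X by auto
  have each: "real (card (X - V.span (S \<union> set vs))) = real CARD('a) ^ m - real CARD('a) ^ (card S + k)"
    if vs: "vs \<in> ext X S k" for vs
  proof -
    have sub: "V.span (S \<union> set vs) \<subseteq> X"
      using vs S X by (intro V.span_minimal) (auto simp: ext_def)
    have fU: "finite (S \<union> set vs)" using fS by simp
    have cs: "card (V.span (S \<union> set vs)) = CARD('a) ^ (card S + k)"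
      using card_span[OF fU ext_card_set(2)[OF vs fS]] ext_card_set(1)[OF vs fS] by simp
    have "card (X - V.span (S \<union> set vs)) = card X - card (V.span (S \<union> set vs))"
      using card_Diff_subset[OF finite_subset[OF sub X(2)] sub] .
    moreover have "card (V.span (S \<union> set vs)) \<le> card X" using card_mono[OF X(2) sub] .
    ultimately show ?thesis using cs X(3) by (simp add: of_nat_diff)
  qed
  have "card (ext X S (Suc k)) = card (SIGMA vs:ext X S k. X - V.span (S \<union> set vs))"
    unfolding ext_Suc by (rule card_image[OF inj])
  also have "\<dots> = (\<Sum>vs\<in>ext X S k. card (X - V.span (S \<union> set vs)))"
    by (rule card_SigmaI) (use fin X in auto)
  finally have "real (card (ext X S (Suc k))) = (\<Sum>vs\<in>ext X S k. real (card (X - V.span (S \<union> set vs))))"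
    by simp
  also have "\<dots> = (\<Sum>vs\<in>ext X S k. real CARD('a) ^ m - real CARD('a) ^ (card S + k))"
    using each by (rule sum.cong[OF refl])
  also have "\<dots> = real (card (ext X S k)) * (real CARD('a) ^ m - real CARD('a) ^ (card S + k))"
    by simp
  also have "\<dots> = PP CARD('a) m (card S) (Suc k)" using IH by (simp add: PP_def)
  finally show ?case .
qed

lemma Sub_count:
  fixes X :: "(nat \<Rightarrow> 'a::{field,finite}) set"
  assumes X: "V.subspace X" "finite X" "card X = CARD('a) ^ m"
    and S: "S \<subseteq> X" "V.independent S" and r: "card S \<le> r" "r \<le> m"
  shows "real (card (Sub X S r)) * PP CARD('a) r (card S) (r - card S) = PP CARD('a) m (card S) (r - card S)"
    and "finite (Sub X S r)"
proof -
  let ?k = "r - card S"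
  have fS: "finite S" using S X finite_subset by auto
  show fSub: "finite (Sub X S r)"
    by (rule finite_subset[of _ "Pow X"]) (use X in \<open>auto simp: Sub_def\<close>)
  have U: "ext X S ?k = (\<Union>U\<in>Sub X S r. ext U S ?k)"
  proof
    show "ext X S ?k \<subseteq> (\<Union>U\<in>Sub X S r. ext U S ?k)"
    proof
      fix vs assume vs: "vs \<in> ext X S ?k"
      let ?U = "V.span (S \<union> set vs)"
      have ss: "S \<union> set vs \<subseteq> X" using vs S by (auto simp: ext_def)
      have "?U \<subseteq> X" using V.span_minimal[OF ss X(1)] .
      moreover have "S \<subseteq> ?U" using V.span_superset by blast
      moreover have "V.dim ?U = r"
        using V.dim_span_eq_card_independent[OF ext_card_set(2)[OF vs fS]] ext_card_set(1)[OF vs fS] r by simp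
      ultimately have "?U \<in> Sub X S r" by (simp add: Sub_def)
      moreover have "vs \<in> ext ?U S ?k" using vs V.span_superset[of "S \<union> set vs"] by (auto simp: ext_def)
      ultimately show "vs \<in> (\<Union>U\<in>Sub X S r. ext U S ?k)" by blast
    qed
    show "(\<Union>U\<in>Sub X S r. ext U S ?k) \<subseteq> ext X S ?k"
    proof (rule UN_least)
      fix U assume "U \<in> Sub X S r"
      hence "U \<subseteq> X" by (simp add: Sub_def)
      thus "ext U S ?k \<subseteq> ext X S ?k" by (rule ext_mono)
    qed
  qed
  have eqspan: "U = V.span (S \<union> set vs)" if U: "U \<in> Sub X S r" and vs: "vs \<in> ext U S ?k" for U vs
  proof -
    have fU: "finite U" using U X finite_subset by (auto simp: Sub_def)
    show ?thesis
      using span_eq_of_card[OF _ fU, of "S \<union> set vs"] U vs ext_card_set[OF vs fS] r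
      by (auto simp: Sub_def ext_def)
  qed
  have cardU: "real (card (ext U S ?k)) = PP CARD('a) r (card S) ?k" if U: "U \<in> Sub X S r" for U
  proof -
    have fU: "finite U" using U X finite_subset by (auto simp: Sub_def)
    have "card U = CARD('a) ^ r" using card_subspace[OF _ fU] U by (auto simp: Sub_def)
    thus ?thesis using card_ext[of U r S ?k] U fU S r by (auto simp: Sub_def)
  qed
  have "card (ext X S ?k) = (\<Sum>U\<in>Sub X S r. card (ext U S ?k))"
    unfolding U
  proof (rule card_UN_disjoint[OF fSub])
    show "\<forall>U\<in>Sub X S r. finite (ext U S ?k)"
      using X(2) by (auto simp: Sub_def intro!: ext_finite elim: finite_subset)
    show "\<forall>U\<in>Sub X S r. \<forall>U'\<in>Sub X S r. U \<noteq> U' \<longrightarrow> ext U S ?k \<inter> ext U' S ?k = {}"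
      using eqspan by blast
  qed
  hence "real (card (ext X S ?k)) = (\<Sum>U\<in>Sub X S r. real (card (ext U S ?k)))" by simp
  also have "\<dots> = real (card (Sub X S r)) * PP CARD('a) r (card S) ?k" using cardU by simp
  finally show "real (card (Sub X S r)) * PP CARD('a) r (card S) ?k = PP CARD('a) m (card S) ?k"
    using card_ext[OF X S, of ?k] r by simp
qed



lemma PP_bounds:
  assumes q: "q \<ge> 2" and k: "s + k \<le> m"
  shows "real q ^ ((m - 1) * k) \<le> PP q m s k" "PP q m s k \<le> real q ^ (m * k)" "PP q m s k > 0"
proof -
  have f: "real q ^ (m - 1) \<le> real q ^ m - real q ^ (s + i) \<and> real q ^ m - real q ^ (s + i) \<le> real q ^ m"
    if i: "i \<in> {..<k}" for i
  proof -
    have m1: "m \<ge> 1" and le: "s + i \<le> m - 1" using i k by auto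
    have "real q ^ (s + i) \<le> real q ^ (m - 1)" using le q by (intro power_increasing) auto
    moreover have "real q ^ m = real q * real q ^ (m - 1)" using m1 by (cases m) auto
    moreover have "2 * real q ^ (m-1) \<le> real q * real q ^ (m-1)"
      using q by (intro mult_right_mono) auto
    moreover have "real q ^ (s+i) \<ge> 0" by simp
    ultimately show ?thesis by linarith
  qed
  have "(\<Prod>i<k. real q ^ (m - 1)) \<le> PP q m s k"
    unfolding PP_def by (rule prod_mono) (use f in \<open>simp\<close>)
  thus "real q ^ ((m - 1) * k) \<le> PP q m s k" by (simp add: power_mult)
  have "PP q m s k \<le> (\<Prod>i<k. real q ^ m)"
    unfolding PP_def
  proof (rule prod_mono)
    fix i assume i: "i \<in> {..<k}"
    have "0 \<le> real q ^ (m - 1)" by simp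
    thus "0 \<le> real q ^ m - real q ^ (s + i) \<and> real q ^ m - real q ^ (s + i) \<le> real q ^ m"
      using f[OF i] by linarith
  qed
  thus "PP q m s k \<le> real q ^ (m * k)" by (simp add: power_mult)
  have "0 < real q ^ ((m - 1) * k)" using q by simp
  thus "PP q m s k > 0" using \<open>real q ^ ((m - 1) * k) \<le> PP q m s k\<close> by linarith
qed

lemma Sub_bounds:
  fixes X :: "(nat \<Rightarrow> 'a::{field,finite}) set"
  assumes X: "V.subspace X" "finite X" "card X = CARD('a) ^ m"
    and S: "S \<subseteq> X" "V.independent S" and r: "card S \<le> r" "r \<le> m"
  shows "real (card (Sub X S r)) \<le> real CARD('a) ^ (m * (r - card S)) / real CARD('a) ^ ((r - 1) * (r - card S))"
    and "real CARD('a) ^ ((m - 1) * (r - card S)) / real CARD('a) ^ (r * (r - card S)) \<le> real (card (Sub X S r))"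
proof -
  let ?q = "CARD('a)" and ?k = "r - card S"
  have q: "?q \<ge> 2" by (rule card_ge2)
  have eq: "real (card (Sub X S r)) * PP ?q r (card S) ?k = PP ?q m (card S) ?k"
    using Sub_count(1)[OF X S r] .
  have b1: "card S + ?k \<le> r" "card S + ?k \<le> m" using r by auto
  note B1 = PP_bounds[OF q b1(1)] and B2 = PP_bounds[OF q b1(2)]
  have c: "real (card (Sub X S r)) = PP ?q m (card S) ?k / PP ?q r (card S) ?k"
    using eq B1(3) by (simp add: field_simps)
  show "real (card (Sub X S r)) \<le> real ?q ^ (m * ?k) / real ?q ^ ((r - 1) * ?k)"
    unfolding c using B1 B2 by (intro frac_le) auto
  show "real ?q ^ ((m - 1) * ?k) / real ?q ^ (r * ?k) \<le> real (card (Sub X S r))"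
    unfolding c using B1 B2 q by (intro frac_le) auto
qed

lemma Er_Sub: "Er n r = Sub (Vn n) {} r"
  by (auto simp: Er_def Sub_def sdim_eq)

lemma ext_nonempty:
  fixes X :: "(nat \<Rightarrow> 'a::{field,finite}) set"
  assumes X: "V.subspace X" "finite X" "card X = CARD('a) ^ m"
    and S: "S \<subseteq> X" "V.independent S" and k: "card S + k \<le> m"
  shows "ext X S k \<noteq> {}"
proof
  assume "ext X S k = {}"
  hence "PP CARD('a) m (card S) k = 0" using card_ext[OF X S k] by simp
  thus False using PP_bounds(3)[OF card_ge2[where 'a='a] k] by simp
qed

lemma basis_of:
  fixes U :: "(nat \<Rightarrow> 'a::{field,finite}) set"
  assumes "V.subspace U" "finite U"
  obtains B where "B \<subseteq> U" "V.independent B" "V.span B = U" "card B = V.dim U" "finite B"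
proof -
  obtain B where B: "B \<subseteq> U" "V.independent B" "U \<subseteq> V.span B" "card B = V.dim U"
    using V.basis_exists by blast
  have "V.span B = U" using B assms V.span_minimal[of B U] by auto
  thus ?thesis using that B assms finite_subset by blast
qed

lemma extend_subspace:
  fixes Y :: "(nat \<Rightarrow> 'a::{field,finite}) set"
  assumes Y: "V.subspace Y" "Y \<subseteq> Vn n" and d: "V.dim Y \<le> d" "d \<le> n"
  obtains X where "V.subspace X" "Y \<subseteq> X" "X \<subseteq> Vn n" "V.dim X = d"
proof -
  have fV: "finite (Vn n :: (nat \<Rightarrow> 'a) set)" and cV: "card (Vn n :: (nat \<Rightarrow> 'a) set) = CARD('a) ^ n"
    using Vn_card by auto
  have fY: "finite Y" using Y fV finite_subset by auto
  obtain B where B: "B \<subseteq> Y" "V.independent B" "V.span B = Y" "card B = V.dim Y" "finite B"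
    using basis_of[OF Y(1) fY] by blast
  have "ext (Vn n) B (d - V.dim Y) \<noteq> {}"
    using ext_nonempty[OF Vn_subspace fV cV, of B "d - V.dim Y"] B Y d by auto
  then obtain vs where vs: "vs \<in> ext (Vn n) B (d - V.dim Y)" by blast
  let ?X = "V.span (B \<union> set vs)"
  have "V.subspace ?X" by simp
  moreover have "Y \<subseteq> ?X" using B V.span_mono[of B "B \<union> set vs"] by auto
  moreover have "?X \<subseteq> Vn n" using vs B Y by (intro V.span_minimal[OF _ Vn_subspace]) (auto simp: ext_def)
  moreover have "V.dim ?X = d"
    using V.dim_span_eq_card_independent[OF ext_card_set(2)[OF vs B(5)]] ext_card_set(1)[OF vs B(5)] B d by simp
  ultimately show ?thesis using that by blast
qed

lemma span_disjoint:
  fixes A :: "(nat \<Rightarrow> 'a::{field,finite}) set"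
  assumes fin: "finite A" "finite B" and ind: "V.independent (A \<union> B)" and dis: "A \<inter> B = {}"
    and x: "x \<in> V.span A" "x \<in> V.span B"
  shows "x = 0"
proof -
  let ?f = "\<lambda>(a,b). a + b"
  have iA: "V.independent A" "V.independent B" using ind V.independent_mono by auto
  have img: "?f ` (V.span A \<times> V.span B) = V.span (A \<union> B)"
    by (auto simp: V.span_Un)
  have fAB: "finite (A \<union> B)" using fin by simp
  have "card (V.span A \<times> V.span B) = CARD('a) ^ card A * CARD('a) ^ card B"
    using card_span[OF fin(1) iA(1)] card_span[OF fin(2) iA(2)] by (simp add: card_cartesian_product)
  also have "\<dots> = card (V.span (A \<union> B))"
    using card_span[OF fAB ind] card_Un_disjoint[OF fin dis] by (simp add: power_add)
  finally have "card (?f ` (V.span A \<times> V.span B)) = card (V.span A \<times> V.span B)" using img by simp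
  moreover have "finite (V.span A \<times> V.span B)"
  proof -
    have "card (V.span A) > 0" "card (V.span B) > 0"
      using card_span[OF fin(1) iA(1)] card_span[OF fin(2) iA(2)] card_ge2[where 'a='a] by auto
    thus ?thesis using card_ge_0_finite by blast
  qed
  ultimately have inj: "inj_on ?f (V.span A \<times> V.span B)" by (intro eq_card_imp_inj_on) auto
  have "(x, 0) \<in> V.span A \<times> V.span B" "(0, x) \<in> V.span A \<times> V.span B" using x V.span_zero by auto
  moreover have "?f (x, 0) = ?f (0, x)" by simp
  ultimately have "(x, 0) = (0, x)" using inj by (meson inj_onD)
  thus ?thesis by simp
qed



definition Bl :: "nat \<Rightarrow> nat \<Rightarrow> nat \<Rightarrow> (nat \<Rightarrow> 'a::{field,finite}) set \<Rightarrow> (nat \<Rightarrow> 'a) set set" where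
  "Bl n r \<rho> U = {V \<in> Er n r. dI U V \<le> \<rho>}"

lemma dI_Er: "U \<in> Er n r \<Longrightarrow> W \<in> Er n r \<Longrightarrow> dI U W = V.dim (V.span (U \<union> W)) - r"
  by (simp add: dI_def Er_def sdim_eq)

lemma Er_facts:
  fixes U :: "(nat \<Rightarrow> 'a::{field,finite}) set"
  assumes "U \<in> Er n r"
  shows "V.subspace U" "U \<subseteq> Vn n" "V.dim U = r" "finite U" "card U = CARD('a) ^ r"
proof -
  show s: "V.subspace U" "U \<subseteq> Vn n" "V.dim U = r" using assms by (auto simp: Er_def sdim_eq)
  show f: "finite U" using s(2) Vn_card finite_subset by blast
  show "card U = CARD('a) ^ r" using card_subspace[OF s(1) f] s(3) by simp
qed

lemma ball_upper:
  fixes U :: "(nat \<Rightarrow> 'a::{field,finite}) set"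
  assumes U: "U \<in> Er n r" and rn: "r + \<rho> \<le> n"
  shows "real (card (Bl n r \<rho> U)) \<le>
    (real CARD('a) ^ (n * \<rho>) / real CARD('a) ^ ((r + \<rho> - 1) * \<rho>)) *
    (real CARD('a) ^ ((r + \<rho>) * r) / real CARD('a) ^ ((r - 1) * r))"
proof -
  let ?q = "real CARD('a)"
  let ?b1 = "?q ^ (n * \<rho>) / ?q ^ ((r + \<rho> - 1) * \<rho>)"
  let ?b2 = "?q ^ ((r + \<rho>) * r) / ?q ^ ((r - 1) * r)"
  note UF = Er_facts[OF U]
  have fV: "finite (Vn n :: (nat \<Rightarrow> 'a) set)" and cV: "card (Vn n :: (nat \<Rightarrow> 'a) set) = CARD('a) ^ n"
    using Vn_card by auto
  obtain BU where BU: "BU \<subseteq> U" "V.independent BU" "V.span BU = U" "card BU = r" "finite BU"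
    using basis_of[OF UF(1) UF(4)] UF(3) by metis
  let ?Xs = "Sub (Vn n) BU (r + \<rho>)"
  have cover: "Bl n r \<rho> U \<subseteq> (\<Union>X\<in>?Xs. Sub X {} r)"
  proof
    fix W assume W: "W \<in> Bl n r \<rho> U"
    hence WE: "W \<in> Er n r" and d: "dI U W \<le> \<rho>" by (auto simp: Bl_def)
    note WF = Er_facts[OF WE]
    let ?Y = "V.span (U \<union> W)"
    have Ysub: "?Y \<subseteq> Vn n" using UF WF by (intro V.span_minimal[OF _ Vn_subspace]) auto
    have "V.dim ?Y \<le> r + \<rho>" using d dI_Er[OF U WE] by simp
    then obtain X where X: "V.subspace X" "?Y \<subseteq> X" "X \<subseteq> Vn n" "V.dim X = r + \<rho>"
      using extend_subspace[OF V.subspace_span Ysub _ rn] by blast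
    have UW: "U \<union> W \<subseteq> ?Y" by (rule V.span_superset)
    have "X \<in> ?Xs" using X BU UW by (auto simp: Sub_def)
    moreover have "W \<in> Sub X {} r" using X UW WF by (auto simp: Sub_def)
    ultimately show "W \<in> (\<Union>X\<in>?Xs. Sub X {} r)" by blast
  qed
  have BUV: "BU \<subseteq> Vn n" using BU UF by auto
  have fXs: "finite ?Xs" using Sub_count(2)[OF Vn_subspace fV cV BUV BU(2), of "r+\<rho>"] BU rn by simp
  have cXs: "real (card ?Xs) \<le> ?b1"
    using Sub_bounds(1)[OF Vn_subspace fV cV BUV BU(2), of "r+\<rho>"] BU rn by simp
  have each: "real (card (Sub X {} r)) \<le> ?b2" if X: "X \<in> ?Xs" for X
  proof -
    have Xs: "V.subspace X" "X \<subseteq> Vn n" "V.dim X = r + \<rho>" using X by (auto simp: Sub_def)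
    have fX: "finite X" using Xs fV finite_subset by auto
    have cX: "card X = CARD('a) ^ (r + \<rho>)" using card_subspace[OF Xs(1) fX] Xs by simp
    show ?thesis using Sub_bounds(1)[OF Xs(1) fX cX, of "{}" r] V.independent_empty by simp
  qed
  have "card (Bl n r \<rho> U) \<le> card (\<Union>X\<in>?Xs. Sub X {} r)"
  proof (rule card_mono[OF _ cover])
    show "finite (\<Union>X\<in>?Xs. Sub X {} r)"
    proof (rule finite_UN_I[OF fXs])
      fix X assume X: "X \<in> ?Xs"
      have Xs: "V.subspace X" "X \<subseteq> Vn n" "V.dim X = r + \<rho>" using X by (auto simp: Sub_def)
      have fX: "finite X" using Xs fV finite_subset by auto
      have cX: "card X = CARD('a) ^ (r + \<rho>)" using card_subspace[OF Xs(1) fX] Xs by simp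
      show "finite (Sub X {} r)" using Sub_count(2)[OF Xs(1) fX cX, of "{}" r] V.independent_empty by simp
    qed
  qed
  also have "\<dots> \<le> (\<Sum>X\<in>?Xs. card (Sub X {} r))" by (rule card_UN_le[OF fXs])
  finally have "real (card (Bl n r \<rho> U)) \<le> (\<Sum>X\<in>?Xs. real (card (Sub X {} r)))"
    by (metis of_nat_le_iff of_nat_sum)
  also have "\<dots> \<le> real (card ?Xs) * ?b2"
    using sum_bounded_above[of ?Xs "\<lambda>X. real (card (Sub X {} r))" ?b2] each by simp
  also have "\<dots> \<le> ?b1 * ?b2"
    by (rule mult_right_mono[OF cXs]) simp
  finally show ?thesis .
qed



lemma ball_lower_W:
  fixes U :: "(nat \<Rightarrow> 'a::{field,finite}) set"
  assumes U: "U \<in> Er n r" and rr: "\<rho> \<le> r" and rn: "r + \<rho> \<le> n" and W: "W \<in> Sub U {} (r - \<rho>)"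
  shows "\<exists>T. T \<subseteq> Bl n r \<rho> U \<and> (\<forall>Y\<in>T. Y \<inter> U = W) \<and> finite T \<and>
     real CARD('a) ^ ((n - 1) * \<rho>) / real CARD('a) ^ (r * \<rho>) \<le> real (card T)"
proof -
  let ?q = "real CARD('a)"
  note UF = Er_facts[OF U]
  have fV: "finite (Vn n :: (nat \<Rightarrow> 'a) set)" and cV: "card (Vn n :: (nat \<Rightarrow> 'a) set) = CARD('a) ^ n"
    using Vn_card by auto
  have Ws: "V.subspace W" "W \<subseteq> U" "V.dim W = r - \<rho>" using W by (auto simp: Sub_def)
  have fW: "finite W" using Ws UF finite_subset by auto
  obtain BW where BW: "BW \<subseteq> W" "V.independent BW" "V.span BW = W" "card BW = r - \<rho>" "finite BW"
    using basis_of[OF Ws(1) fW] Ws(3) by metis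
  have BWU: "BW \<subseteq> U" using BW Ws by auto
  have "ext U BW \<rho> \<noteq> {}" using ext_nonempty[OF UF(1) UF(4) UF(5) BWU BW(2)] BW rr by simp
  then obtain ws where ws: "ws \<in> ext U BW \<rho>" by blast
  define BU where "BU = BW \<union> set ws"
  have fBU: "finite BU" using BW by (simp add: BU_def)
  have iBU: "V.independent BU" using ext_card_set(2)[OF ws BW(5)] by (simp add: BU_def)
  have cBU: "card BU = r" using ext_card_set(1)[OF ws BW(5)] BW rr by (simp add: BU_def)
  have BUU: "BU \<subseteq> U" using ws BWU by (auto simp: BU_def ext_def)
  have sBU: "V.span BU = U" using span_eq_of_card[OF UF(1) UF(4) BUU iBU] cBU UF(3) by simp
  have BUV: "BU \<subseteq> Vn n" using BUU UF by auto
  define E where "E = ext (Vn n) BU \<rho>"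
  define f where "f = (\<lambda>vs. V.span (BW \<union> set vs))"
  define T where "T = f ` E"
  have fE: "finite E" using ext_finite fV by (simp add: E_def)
  have vsfacts: "V.independent (BW \<union> set vs)" "card (BW \<union> set vs) = r" "BW \<union> set vs \<subseteq> Vn n"
     "set vs \<inter> BW = {}" "distinct vs" "length vs = \<rho>" "V.independent (BU \<union> set vs)"
     "card (BU \<union> set vs) = r + \<rho>" "set vs \<inter> BU = {}" if vs: "vs \<in> E" for vs
  proof -
    show i2: "V.independent (BU \<union> set vs)" using ext_card_set(2)[OF vs[unfolded E_def] fBU] .
    show "card (BU \<union> set vs) = r + \<rho>" using ext_card_set(1)[OF vs[unfolded E_def] fBU] cBU by simp
    show "V.independent (BW \<union> set vs)" using V.independent_mono[OF i2] by (auto simp: BU_def)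
    show d: "set vs \<inter> BW = {}" "distinct vs" "length vs = \<rho>" "set vs \<inter> BU = {}"
      using vs by (auto simp: E_def ext_def BU_def)
    show "card (BW \<union> set vs) = r"
      using d BW rr by (simp add: card_Un_disjoint distinct_card inf_commute)
    show "BW \<union> set vs \<subseteq> Vn n" using vs BWU UF by (auto simp: E_def ext_def)
  qed
  have inBall: "f vs \<in> Bl n r \<rho> U" if vs: "vs \<in> E" for vs
  proof -
    note vf = vsfacts[OF vs]
    have "f vs \<in> Er n r"
      using vf V.span_minimal[OF vf(3) Vn_subspace] V.dim_span_eq_card_independent[OF vf(1)]
      by (simp add: Er_def sdim_eq f_def)
    moreover have "V.dim (V.span (U \<union> f vs)) \<le> r + \<rho>"
    proof -
      have "V.span (U \<union> f vs) \<subseteq> V.span (BU \<union> set vs)"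
      proof (rule V.span_minimal)
        show "U \<union> f vs \<subseteq> V.span (BU \<union> set vs)"
          unfolding f_def using sBU V.span_mono[of "BU" "BU \<union> set vs"] V.span_mono[of "BW \<union> set vs" "BU \<union> set vs"]
          by (auto simp: BU_def)
      qed simp
      hence "V.dim (V.span (U \<union> f vs)) \<le> card (BU \<union> set vs)"
        by (rule V.dim_le_card) (use fBU in simp)
      thus ?thesis using vf(8) by simp
    qed
    ultimately show ?thesis using dI_Er[OF U] by (simp add: Bl_def)
  qed
  have inter: "f vs \<inter> U = W" if vs: "vs \<in> E" for vs
  proof
    show "W \<subseteq> f vs \<inter> U" using BW Ws V.span_mono[of BW "BW \<union> set vs"] by (auto simp: f_def)
    show "f vs \<inter> U \<subseteq> W"
    proof
      fix x assume x: "x \<in> f vs \<inter> U"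
      then obtain a b where ab: "x = a + b" "a \<in> V.span BW" "b \<in> V.span (set vs)"
        by (auto simp: f_def V.span_Un)
      have aU: "a \<in> U" using ab BW Ws by auto
      have "b = x - a" using ab by simp
      hence "b \<in> U" using x aU UF(1) V.subspace_diff by auto
      hence "b \<in> V.span BU" using sBU by simp
      hence "b = 0" using span_disjoint[OF fBU _ vsfacts(7)[OF vs] _ _ ab(3)] vsfacts(9)[OF vs]
        by (auto simp: inf_commute)
      thus "x \<in> W" using ab BW by simp
    qed
  qed
  have fib: "card {vs \<in> E. f vs = Y} \<le> card (ext Y BW \<rho>)" if Y: "Y \<in> T" for Y
  proof (rule card_mono)
    have YE: "Y \<in> Er n r" using Y inBall by (auto simp: T_def Bl_def)
    show "finite (ext Y BW \<rho>)" using ext_finite Er_facts(4)[OF YE] by blast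
    show "{vs \<in> E. f vs = Y} \<subseteq> ext Y BW \<rho>"
    proof
      fix vs assume "vs \<in> {vs \<in> E. f vs = Y}"
      hence vs: "vs \<in> E" and fy: "f vs = Y" by auto
      note vf = vsfacts[OF vs]
      have "set vs \<subseteq> Y" using fy V.span_superset[of "BW \<union> set vs"] by (auto simp: f_def)
      thus "vs \<in> ext Y BW \<rho>" using vf by (auto simp: ext_def)
    qed
  qed
  have fibc: "real (card (ext Y BW \<rho>)) \<le> ?q ^ (r * \<rho>)" if Y: "Y \<in> T" for Y
  proof -
    have YE: "Y \<in> Er n r" using Y inBall by (auto simp: T_def Bl_def)
    note YF = Er_facts[OF YE]
    obtain vs where vs: "vs \<in> E" "Y = f vs" using Y by (auto simp: T_def)
    have BWY: "BW \<subseteq> Y" using vs V.span_superset[of "BW \<union> set vs"] by (auto simp: f_def)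
    have "real (card (ext Y BW \<rho>)) = PP CARD('a) r (card BW) \<rho>"
      using card_ext[OF YF(1) YF(4) YF(5) BWY BW(2)] BW rr by simp
    also have "\<dots> \<le> ?q ^ (r * \<rho>)" using PP_bounds(2)[OF card_ge2[where 'a='a], of "card BW" \<rho> r] BW rr by simp
    finally show ?thesis .
  qed
  have fT: "finite T" using fE by (simp add: T_def)
  have Eeq: "E = (\<Union>Y\<in>T. {vs \<in> E. f vs = Y})" by (auto simp: T_def)
  have "card E \<le> (\<Sum>Y\<in>T. card {vs \<in> E. f vs = Y})"
    by (subst Eeq) (rule card_UN_le[OF fT])
  hence "real (card E) \<le> (\<Sum>Y\<in>T. real (card {vs \<in> E. f vs = Y}))" by (simp only: of_nat_sum[symmetric] of_nat_le_iff)
  also have "\<dots> \<le> (\<Sum>Y\<in>T. ?q ^ (r * \<rho>))"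
    by (rule sum_mono) (use fib fibc in \<open>fastforce intro: order_trans\<close>)
  also have "\<dots> = real (card T) * ?q ^ (r * \<rho>)" by simp
  finally have cE: "real (card E) \<le> real (card T) * ?q ^ (r * \<rho>)" .
  have "?q ^ ((n - 1) * \<rho>) \<le> real (card E)"
    using card_ext[OF Vn_subspace fV cV BUV iBU, of \<rho>] PP_bounds(1)[OF card_ge2[where 'a='a], of r \<rho> n] cBU rn
    by (simp add: E_def)
  hence "?q ^ ((n - 1) * \<rho>) \<le> real (card T) * ?q ^ (r * \<rho>)" using cE by linarith
  hence "?q ^ ((n - 1) * \<rho>) / ?q ^ (r * \<rho>) \<le> real (card T)"
    by (simp add: divide_le_eq)
  moreover have "T \<subseteq> Bl n r \<rho> U" using inBall by (auto simp: T_def)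
  moreover have "\<forall>Y\<in>T. Y \<inter> U = W" using inter by (auto simp: T_def)
  ultimately show ?thesis using fT by blast
qed

lemma ball_lower:
  fixes U :: "(nat \<Rightarrow> 'a::{field,finite}) set"
  assumes U: "U \<in> Er n r" and rr: "\<rho> \<le> r" and rn: "r + \<rho> \<le> n"
  shows "(real CARD('a) ^ ((r - 1) * (r - \<rho>)) / real CARD('a) ^ ((r - \<rho>) * (r - \<rho>))) *
     (real CARD('a) ^ ((n - 1) * \<rho>) / real CARD('a) ^ (r * \<rho>)) \<le> real (card (Bl n r \<rho> U))"
proof -
  let ?q = "real CARD('a)"
  let ?t = "?q ^ ((n - 1) * \<rho>) / ?q ^ (r * \<rho>)"
  note UF = Er_facts[OF U]
  let ?Ws = "Sub U {} (r - \<rho>)"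
  have fWs: "finite ?Ws" using Sub_count(2)[OF UF(1) UF(4) UF(5), of "{}" "r - \<rho>"] V.independent_empty by simp
  have cWs: "?q ^ ((r - 1) * (r - \<rho>)) / ?q ^ ((r - \<rho>) * (r - \<rho>)) \<le> real (card ?Ws)"
    using Sub_bounds(2)[OF UF(1) UF(4) UF(5), of "{}" "r - \<rho>"] V.independent_empty by simp
  obtain Tf where Tf: "\<And>W. W \<in> ?Ws \<Longrightarrow> Tf W \<subseteq> Bl n r \<rho> U \<and> (\<forall>Y\<in>Tf W. Y \<inter> U = W) \<and> finite (Tf W) \<and>
     ?t \<le> real (card (Tf W))"
    using ball_lower_W[OF U rr rn] by metis
  have fB: "finite (Bl n r \<rho> U)"
  proof -
    have "Bl n r \<rho> U \<subseteq> Pow (Vn n)" by (auto simp: Bl_def Er_def)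
    thus ?thesis using Vn_card finite_subset by (metis finite_Pow_iff)
  qed
  have "card (\<Union>W\<in>?Ws. Tf W) = (\<Sum>W\<in>?Ws. card (Tf W))"
  proof (rule card_UN_disjoint[OF fWs])
    show "\<forall>W\<in>?Ws. finite (Tf W)" using Tf by blast
    show "\<forall>W\<in>?Ws. \<forall>W'\<in>?Ws. W \<noteq> W' \<longrightarrow> Tf W \<inter> Tf W' = {}"
    proof (intro ballI impI)
      fix W W' assume "W \<in> ?Ws" "W' \<in> ?Ws" "W \<noteq> W'"
      thus "Tf W \<inter> Tf W' = {}" using Tf[of W] Tf[of W'] by blast
    qed
  qed
  moreover have "card (\<Union>W\<in>?Ws. Tf W) \<le> card (Bl n r \<rho> U)"
    by (rule card_mono[OF fB]) (use Tf in blast)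
  ultimately have "(\<Sum>W\<in>?Ws. real (card (Tf W))) \<le> real (card (Bl n r \<rho> U))"
    by (simp only: of_nat_sum[symmetric] of_nat_le_iff)
  moreover have "real (card ?Ws) * ?t \<le> (\<Sum>W\<in>?Ws. real (card (Tf W)))"
    using sum_bounded_below[of ?Ws ?t "\<lambda>W. real (card (Tf W))"] Tf by simp
  moreover have "(?q ^ ((r - 1) * (r - \<rho>)) / ?q ^ ((r - \<rho>) * (r - \<rho>))) * ?t \<le> real (card ?Ws) * ?t"
    by (rule mult_right_mono[OF cWs]) simp
  ultimately show ?thesis by linarith
qed



lemma count_swap:
  assumes "finite X" "finite Y"
  shows "(\<Sum>c\<in>X. card {y\<in>Y. R y c}) = (\<Sum>y\<in>Y. card {c\<in>X. R y c})"
proof -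
  have "(\<Sum>c\<in>X. card {y\<in>Y. R y c}) = (\<Sum>c\<in>X. \<Sum>y\<in>Y. if R y c then 1 else 0)"
    using assms by (simp add: sum.inter_filter[symmetric])
  also have "\<dots> = (\<Sum>y\<in>Y. \<Sum>c\<in>X. if R y c then 1 else 0)" by (rule sum.swap)
  also have "\<dots> = (\<Sum>y\<in>Y. card {c\<in>X. R y c})"
    using assms by (simp add: sum.inter_filter[symmetric])
  finally show ?thesis .
qed

lemma greedy_step:
  fixes X :: "'b set"
  assumes fin: "finite X" and D: "D > 0" and deg: "\<And>x. x \<in> X \<Longrightarrow> D \<le> real (card {c\<in>X. R x c})"
    and Y: "Y \<subseteq> X" "Y \<noteq> {}"
  shows "\<exists>c\<in>X. real (card Y) * D / real (card X) \<le> real (card {y\<in>Y. R y c})"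
proof (rule ccontr)
  assume "\<not> ?thesis"
  hence lt: "\<And>c. c \<in> X \<Longrightarrow> real (card {y\<in>Y. R y c}) < real (card Y) * D / real (card X)" by force
  have fY: "finite Y" using Y fin finite_subset by auto
  have Xne: "X \<noteq> {}" using Y by auto
  have "(\<Sum>c\<in>X. real (card {y\<in>Y. R y c})) < (\<Sum>c\<in>X. real (card Y) * D / real (card X))"
    by (rule sum_strict_mono[OF fin Xne lt])
  also have "\<dots> = real (card Y) * D" using fin Xne by (simp add: card_gt_0_iff)
  also have "\<dots> \<le> (\<Sum>y\<in>Y. real (card {c\<in>X. R y c}))"
    using sum_bounded_below[of Y D "\<lambda>y. real (card {c\<in>X. R y c})"] deg Y by (auto simp: mult.commute)
  also have "\<dots> = (\<Sum>c\<in>X. real (card {y\<in>Y. R y c}))"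
    unfolding of_nat_sum[symmetric] count_swap[OF fin fY, of R] by (rule refl)
  finally show False by simp
qed

lemma greedy:
  fixes X :: "'b set"
  assumes fin: "finite X" and Xne: "X \<noteq> {}" and D: "D > 0"
    and deg: "\<And>x. x \<in> X \<Longrightarrow> D \<le> real (card {c\<in>X. R x c})"
  shows "\<exists>C\<subseteq>X. C \<noteq> {} \<and> (\<forall>x\<in>X. \<exists>c\<in>C. R x c) \<and>
           real (card C) \<le> real (card X) / D * (ln (real (card X)) + 1)"
proof -
  define N where "N = real (card X)"
  define p where "p = D / N"
  define unc where "unc C = {x\<in>X. \<not> (\<exists>c\<in>C. R x c)}" for C
  have N: "N \<ge> 1" using fin Xne card_gt_0_iff[of X] unfolding N_def by linarith
  have p0: "p > 0" using D N by (simp add: p_def)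
  have p1: "p \<le> 1"
  proof -
    obtain x where "x \<in> X" using Xne by blast
    hence "D \<le> real (card {c\<in>X. R x c})" by (rule deg)
    also have "\<dots> \<le> N" unfolding N_def using fin by (intro of_nat_mono card_mono) auto
    finally show ?thesis using N by (simp add: p_def)
  qed
  have claim: "\<exists>C\<subseteq>X. card C \<le> t \<and> real (card (unc C)) \<le> N * (1 - p) ^ t" for t
  proof (induction t)
    case 0
    have "unc {} = X" by (simp add: unc_def)
    thus ?case by (intro exI[of _ "{}"]) (simp add: N_def)
  next
    case (Suc t)
    then obtain C where C: "C \<subseteq> X" "card C \<le> t" "real (card (unc C)) \<le> N * (1 - p) ^ t" by blast
    show ?case
    proof (cases "unc C = {}")
      case True
      thus ?thesis using C p1 N by (intro exI[of _ C]) auto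
    next
      case False
      have uX: "unc C \<subseteq> X" by (auto simp: unc_def)
      have "\<exists>c\<in>X. real (card (unc C)) * D / real (card X) \<le> real (card {y\<in>unc C. R y c})"
        using fin D deg uX False by (rule greedy_step)
      then obtain c where c: "c \<in> X" "real (card (unc C)) * D / real (card X) \<le> real (card {y\<in>unc C. R y c})"
        by blast
      have fu: "finite (unc C)" using uX fin finite_subset by auto
      have eq: "unc (insert c C) = unc C - {y\<in>unc C. R y c}" by (auto simp: unc_def)
      have "card (unc (insert c C)) = card (unc C) - card {y\<in>unc C. R y c}"
        unfolding eq by (rule card_Diff_subset) (use fu in auto)
      moreover have "card {y\<in>unc C. R y c} \<le> card (unc C)" using fu by (intro card_mono) auto
      ultimately have "real (card (unc (insert c C))) = real (card (unc C)) - real (card {y\<in>unc C. R y c})"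
        by simp
      also have "\<dots> \<le> real (card (unc C)) * (1 - p)"
        using c(2) by (simp add: p_def N_def algebra_simps)
      also have "\<dots> \<le> N * (1 - p) ^ t * (1 - p)" using C(3) p1 by (intro mult_right_mono) auto
      finally have u: "real (card (unc (insert c C))) \<le> N * (1 - p) ^ Suc t" by (simp add: ac_simps)
      have "card (insert c C) \<le> Suc t" using C(2) finite_subset[OF C(1) fin] by (simp add: card_insert_if)
      thus ?thesis using u C c by (intro exI[of _ "insert c C"]) auto
    qed
  qed
  define t0 where "t0 = nat \<lfloor>ln N / p\<rfloor> + 1"
  obtain C where C: "C \<subseteq> X" "card C \<le> t0" "real (card (unc C)) \<le> N * (1 - p) ^ t0" using claim by blast
  have lnN: "ln N \<ge> 0" using N by simp
  have "ln N / p < real t0" unfolding t0_def using lnN p0 by linarith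
  hence pt: "ln N < p * real t0" using p0 by (simp add: field_simps)
  have "(1 - p) ^ t0 \<le> exp (- p) ^ t0"
    using p1 by (intro power_mono) (auto simp: exp_ge_add_one_self[of "-p", simplified])
  also have "\<dots> = exp (- (p * real t0))" by (simp add: exp_of_nat_mult[symmetric])
  also have "\<dots> < exp (- ln N)" using pt by simp
  also have "\<dots> = 1 / N" using N by (simp add: exp_minus exp_ln inverse_eq_divide)
  finally have "N * (1 - p) ^ t0 < 1" using N by (simp add: field_simps)
  hence "card (unc C) = 0" using C(3) by linarith
  hence unc0: "unc C = {}" using fin by (simp add: unc_def)
  have "C \<noteq> {}" using unc0 Xne by (auto simp: unc_def)
  moreover have "\<forall>x\<in>X. \<exists>c\<in>C. R x c" using unc0 by (auto simp: unc_def)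
  moreover have "real (card C) \<le> N / D * (ln N + 1)"
  proof -
    have "real (card C) \<le> real t0" using C(2) by simp
    also have "\<dots> \<le> ln N / p + 1" unfolding t0_def using lnN p0 by simp
    also have "\<dots> \<le> ln N / p + 1 / p" using p0 p1 by (simp add: field_simps)
    also have "\<dots> = N / D * (ln N + 1)" using D N by (simp add: p_def field_simps)
    finally show ?thesis .
  qed
  ultimately show ?thesis using C(1) by (auto simp: N_def)
qed



lemma dI_sym: "dI U W = dI W U"
  by (simp add: dI_def Un_commute min.commute)

lemma Er_finite: "finite (Er n r :: (nat \<Rightarrow> 'a::{field,finite}) set set)"
proof -
  have "Er n r \<subseteq> Pow (Vn n :: (nat \<Rightarrow> 'a) set)" by (auto simp: Er_def)
  thus ?thesis using Vn_card finite_subset by (metis finite_Pow_iff)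
qed

lemma Er_bounds:
  assumes rn: "r \<le> n"
  shows "real CARD('a::{field,finite}) ^ ((n - 1) * r) / real CARD('a) ^ (r * r) \<le> real (card (Er n r :: (nat \<Rightarrow> 'a) set set))"
    "real (card (Er n r :: (nat \<Rightarrow> 'a) set set)) \<le> real CARD('a) ^ (n * r) / real CARD('a) ^ ((r - 1) * r)"
proof -
  have fV: "finite (Vn n :: (nat \<Rightarrow> 'a) set)" and cV: "card (Vn n :: (nat \<Rightarrow> 'a) set) = CARD('a) ^ n"
    using Vn_card by auto
  show "real CARD('a) ^ ((n - 1) * r) / real CARD('a) ^ (r * r) \<le> real (card (Er n r :: (nat \<Rightarrow> 'a) set set))"
    using Sub_bounds(2)[OF Vn_subspace fV cV, of "{}" r] V.independent_empty rn by (simp add: Er_Sub)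
  show "real (card (Er n r :: (nat \<Rightarrow> 'a) set set)) \<le> real CARD('a) ^ (n * r) / real CARD('a) ^ ((r - 1) * r)"
    using Sub_bounds(1)[OF Vn_subspace fV cV, of "{}" r] V.independent_empty rn by (simp add: Er_Sub)
qed

lemma Er_nonempty:
  assumes rn: "r \<le> n"
  shows "(Er n r :: (nat \<Rightarrow> 'a::{field,finite}) set set) \<noteq> {}"
proof -
  have "0 < real CARD('a) ^ ((n - 1) * r) / real CARD('a) ^ (r * r)" using card_ge2[where 'a='a] by simp
  hence "0 < real (card (Er n r :: (nat \<Rightarrow> 'a) set set))" using Er_bounds(1)[OF rn, where 'a='a] by linarith
  thus ?thesis by (metis card.empty of_nat_0 less_irrefl)
qed

lemma covrad_le:
  fixes Cs :: "(nat \<Rightarrow> 'a::{field,finite}) set set"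
  assumes "Cs \<subseteq> Er n r" "Cs \<noteq> {}" "r \<le> n"
  shows "covrad n r Cs \<le> \<rho> \<longleftrightarrow> (\<forall>U\<in>Er n r. \<exists>C\<in>Cs. dI U C \<le> \<rho>)"
proof -
  have fC: "finite Cs" using assms Er_finite finite_subset by blast
  have "covrad n r Cs \<le> \<rho> \<longleftrightarrow> (\<forall>U\<in>Er n r. Min ((\<lambda>C. dI U C) ` Cs) \<le> \<rho>)"
  proof -
    have fin: "finite ((\<lambda>U. Min ((\<lambda>C. dI U C) ` Cs)) ` (Er n r :: (nat \<Rightarrow> 'a) set set))"
      by (rule finite_imageI[OF Er_finite])
    have ne: "(\<lambda>U. Min ((\<lambda>C. dI U C) ` Cs)) ` (Er n r :: (nat \<Rightarrow> 'a) set set) \<noteq> {}"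
      using Er_nonempty[OF assms(3)] by simp
    show ?thesis unfolding covrad_def using Max_le_iff[OF fin ne] by simp
  qed
  also have "\<dots> \<longleftrightarrow> (\<forall>U\<in>Er n r. \<exists>C\<in>Cs. dI U C \<le> \<rho>)"
    using fC assms(2) by (simp add: Min_le_iff)
  finally show ?thesis .
qed

lemma dI_self: "U \<in> Er n r \<Longrightarrow> dI U U = 0"
  by (simp add: dI_def sdim_eq)

lemma KC_exists:
  assumes rn: "r \<le> n"
  shows "\<exists>Cs::(nat \<Rightarrow> 'a::{field,finite}) set set. Cs \<subseteq> Er n r \<and> Cs \<noteq> {} \<and> covrad n r Cs \<le> \<rho> \<and> card Cs = card (Er n r :: (nat \<Rightarrow> 'a) set set)"
proof (intro exI[of _ "Er n r"] conjI)
  show "Er n r \<subseteq> Er n r" "card (Er n r :: (nat \<Rightarrow> 'a) set set) = card (Er n r :: (nat \<Rightarrow> 'a) set set)" by auto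
  show ne: "(Er n r :: (nat \<Rightarrow> 'a) set set) \<noteq> {}" by (rule Er_nonempty[OF rn])
  have "\<forall>U\<in>(Er n r :: (nat \<Rightarrow> 'a) set set). \<exists>C\<in>Er n r. dI U C \<le> \<rho>"
  proof
    fix U assume "U \<in> (Er n r :: (nat \<Rightarrow> 'a) set set)"
    thus "\<exists>C\<in>Er n r. dI U C \<le> \<rho>" using dI_self[of U n r] by (intro bexI[of _ U]) auto
  qed
  thus "covrad n r (Er n r :: (nat \<Rightarrow> 'a) set set) \<le> \<rho>"
    using covrad_le[OF subset_refl ne rn] by blast
qed

lemma KC_lower:
  fixes M :: real
  assumes rn: "r \<le> n" and bm: "\<And>U. U \<in> (Er n r :: (nat \<Rightarrow> 'a::{field,finite}) set set) \<Longrightarrow> real (card (Bl n r \<rho> U)) \<le> M"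
  shows "real (card (Er n r :: (nat \<Rightarrow> 'a) set set)) \<le> real (KC TYPE('a) n r \<rho>) * M"
    "KC TYPE('a) n r \<rho> \<ge> 1"
proof -
  let ?P = "\<lambda>m. \<exists>Cs::(nat \<Rightarrow> 'a) set set. Cs \<subseteq> Er n r \<and> Cs \<noteq> {} \<and> covrad n r Cs \<le> \<rho> \<and> card Cs = m"
  have ex: "?P (card (Er n r :: (nat \<Rightarrow> 'a) set set))" by (rule KC_exists[OF rn])
  have "?P (LEAST m. ?P m)" by (rule LeastI[of ?P, OF ex])
  then obtain Cs :: "(nat \<Rightarrow> 'a) set set" where Cs: "Cs \<subseteq> Er n r" "Cs \<noteq> {}" "covrad n r Cs \<le> \<rho>"
    "card Cs = KC TYPE('a) n r \<rho>"
    unfolding KC_def by blast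
  have fC: "finite Cs" using Cs Er_finite finite_subset by blast
  have cov: "\<forall>U\<in>Er n r. \<exists>C\<in>Cs. dI U C \<le> \<rho>" using covrad_le[OF Cs(1,2) rn] Cs(3) by blast
  have "Er n r \<subseteq> (\<Union>C\<in>Cs. Bl n r \<rho> C)"
  proof
    fix U assume U: "U \<in> (Er n r :: (nat \<Rightarrow> 'a) set set)"
    then obtain C where C: "C \<in> Cs" "dI U C \<le> \<rho>" using cov by blast
    hence "U \<in> Bl n r \<rho> C" using U dI_sym[of U C] by (simp add: Bl_def)
    thus "U \<in> (\<Union>C\<in>Cs. Bl n r \<rho> C)" using C by blast
  qed
  hence "card (Er n r :: (nat \<Rightarrow> 'a) set set) \<le> card (\<Union>C\<in>Cs. Bl n r \<rho> C)"
    by (rule card_mono[rotated]) (use fC Er_finite[of n r, where 'a='a] in \<open>auto simp: Bl_def\<close>)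
  also have "\<dots> \<le> (\<Sum>C\<in>Cs. card (Bl n r \<rho> C))" by (rule card_UN_le[OF fC])
  finally have "real (card (Er n r :: (nat \<Rightarrow> 'a) set set)) \<le> (\<Sum>C\<in>Cs. real (card (Bl n r \<rho> C)))"
    by (simp only: of_nat_sum[symmetric] of_nat_le_iff)
  also have "\<dots> \<le> real (card Cs) * M"
    using sum_bounded_above[of Cs "\<lambda>C. real (card (Bl n r \<rho> C))" M] bm Cs(1) by auto
  finally show "real (card (Er n r :: (nat \<Rightarrow> 'a) set set)) \<le> real (KC TYPE('a) n r \<rho>) * M" using Cs(4) by simp
  show "KC TYPE('a) n r \<rho> \<ge> 1" using Cs(2,4) fC by (metis card_0_eq less_one not_less)
qed

lemma KC_upper:
  fixes m :: real
  assumes rn: "r \<le> n" and m: "m > 0"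
    and bm: "\<And>U. U \<in> (Er n r :: (nat \<Rightarrow> 'a::{field,finite}) set set) \<Longrightarrow> m \<le> real (card (Bl n r \<rho> U))"
  shows "real (KC TYPE('a) n r \<rho>) \<le> real (card (Er n r :: (nat \<Rightarrow> 'a) set set)) / m * (ln (real (card (Er n r :: (nat \<Rightarrow> 'a) set set))) + 1)"
proof -
  let ?X = "Er n r :: (nat \<Rightarrow> 'a) set set"
  have deg: "m \<le> real (card {c\<in>?X. dI U c \<le> \<rho>})" if "U \<in> ?X" for U
    using bm[OF that] by (simp add: Bl_def)
  obtain C where C: "C \<subseteq> ?X" "C \<noteq> {}" "\<forall>x\<in>?X. \<exists>c\<in>C. dI x c \<le> \<rho>"
    "real (card C) \<le> real (card ?X) / m * (ln (real (card ?X)) + 1)"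
    using greedy[OF Er_finite Er_nonempty[OF rn] m, of "\<lambda>U c. dI U c \<le> \<rho>"] deg by blast
  have "covrad n r C \<le> \<rho>" using covrad_le[OF C(1,2) rn] C(3) by blast
  hence "KC TYPE('a) n r \<rho> \<le> card C" unfolding KC_def using C by (intro Least_le) blast
  thus ?thesis using C(4) by linarith
qed



lemma logq_ge:
  fixes q x :: real
  assumes q: "1 < q" and x: "0 < x" and le: "q ^ a / q ^ b \<le> x"
  shows "real a - real b \<le> log q x"
proof -
  have "log q (q ^ a / q ^ b) = real a - real b"
    using q by (simp add: log_divide log_nat_power)
  moreover have "log q (q ^ a / q ^ b) \<le> log q x"
    using q x le by (subst log_le_cancel_iff) auto
  ultimately show ?thesis by simp
qed

lemma logq_le:
  fixes q x :: real
  assumes q: "1 < q" and x: "0 < x" and le: "x \<le> q ^ a / q ^ b"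
  shows "log q x \<le> real a - real b"
proof -
  have "log q (q ^ a / q ^ b) = real a - real b"
    using q by (simp add: log_divide log_nat_power)
  moreover have "log q x \<le> log q (q ^ a / q ^ b)"
    using q x le by (subst log_le_cancel_iff) auto
  ultimately show ?thesis by simp
qed

lemma pow4: "real n ^ 2 + 1 \<le> 2 * 4 ^ n"
proof (induction n)
  case 0 thus ?case by simp
next
  case (Suc n)
  have "real (Suc n) ^ 2 + 1 = real n ^ 2 + 2 * real n + 2" by (simp add: power2_eq_square algebra_simps)
  also have "\<dots> \<le> 4 * (real n ^ 2 + 1)"
  proof -
    have "0 \<le> (real n - 1) ^ 2" by simp
    hence "2 * real n \<le> real n ^ 2 + 1" by (simp add: power2_eq_square algebra_simps)
    moreover have "0 \<le> real n ^ 2" by simp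
    ultimately show ?thesis unfolding distrib_left by linarith
  qed
  also have "\<dots> \<le> 4 * (2 * 4 ^ n)" using Suc by simp
  finally show ?case by simp
qed

lemma gauss_bounds:
  assumes r1: "1 \<le> r" and rn: "r \<le> n"
  shows "real r * (real n - real r) - real r \<le> log (real CARD('a::{field,finite})) (gauss_binom CARD('a) n r)"
    "log (real CARD('a::{field,finite})) (gauss_binom CARD('a) n r) \<le> real r * (real n - real r) + real r"
proof -
  let ?q = "CARD('a)"
  have q: "?q \<ge> 2" by (rule card_ge2)
  hence q1: "1 < real ?q" by simp
  have G: "gauss_binom ?q n r = PP ?q n 0 r / PP ?q r 0 r"
    unfolding gauss_binom_def PP_def by (simp add: prod_dividef)
  note A = PP_bounds[OF q, of 0 r n] and B = PP_bounds[OF q, of 0 r r]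
  have Gpos: "gauss_binom ?q n r > 0" unfolding G using A B rn by simp
  have "real ?q ^ ((n - 1) * r) / real ?q ^ (r * r) \<le> gauss_binom ?q n r"
    unfolding G using A B rn q by (intro frac_le) auto
  from logq_ge[OF q1 Gpos this]
  show "real r * (real n - real r) - real r \<le> log (real ?q) (gauss_binom ?q n r)"
    using r1 rn by (simp add: of_nat_diff algebra_simps)
  have "gauss_binom ?q n r \<le> real ?q ^ (n * r) / real ?q ^ ((r - 1) * r)"
    unfolding G using A B rn q by (intro frac_le) auto
  from logq_le[OF q1 Gpos this]
  show "log (real ?q) (gauss_binom ?q n r) \<le> real r * (real n - real r) + real r"
    using r1 rn by (simp add: of_nat_diff algebra_simps)
qed



lemma lnE_bound:
  fixes E q :: real
  assumes q: "q \<ge> 2" and E: "1 \<le> E" "E \<le> q ^ (n * r)" and rn: "r \<le> n"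
  shows "ln E + 1 \<le> q ^ (2 * n + 2)"
proof -
  have "ln E \<le> ln (q ^ (n * r))" using E q by (subst ln_le_cancel_iff) auto
  also have "\<dots> = real (n * r) * ln q" using q by (simp add: ln_realpow)
  also have "\<dots> \<le> real n ^ 2 * q"
  proof -
    have "real (n * r) \<le> real n ^ 2" using rn by (simp add: power2_eq_square mult_left_mono)
    moreover have "ln q \<le> q" using ln_le_minus_one[of q] q by simp
    moreover have "0 \<le> ln q" using q by simp
    ultimately show ?thesis by (intro mult_mono) auto
  qed
  finally have "ln E + 1 \<le> real n ^ 2 * q + 1" by simp
  also have "\<dots> \<le> (real n ^ 2 + 1) * q" using q by (simp add: algebra_simps)
  also have "\<dots> \<le> (2 * 4 ^ n) * q" using pow4[of n] q by (intro mult_right_mono) auto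
  also have "(2 * 4 ^ n :: real) = 2 ^ (2 * n + 1)" by (simp add: power_mult power_add)
  also have "(2::real) ^ (2 * n + 1) \<le> q ^ (2 * n + 1)" using q by (intro power_mono) auto
  finally show ?thesis using q by (simp add: mult.commute)
qed

lemma KC_log_lower:
  assumes r1: "1 \<le> r" and rr: "\<rho> \<le> r" and rn: "r + \<rho> \<le> n"
  shows "real r * (real n - real r) - real \<rho> * (real n - real \<rho>) - 2 * real r - real \<rho>
     \<le> log (real CARD('a::{field,finite})) (real (KC TYPE('a) n r \<rho>))"
proof -
  let ?q = "real CARD('a)"
  have q1: "1 < ?q" using card_ge2[where 'a='a] by simp
  define Bmax where "Bmax = ?q ^ (n * \<rho> + (r + \<rho>) * r) / ?q ^ ((r + \<rho> - 1) * \<rho> + (r - 1) * r)"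
  have bm: "real (card (Bl n r \<rho> U)) \<le> Bmax" if "U \<in> (Er n r :: (nat \<Rightarrow> 'a) set set)" for U
    using ball_upper[OF that rn] by (simp add: Bmax_def power_add)
  have rn': "r \<le> n" using rn by simp
  note KL = KC_lower[OF rn' bm]
  define E where "E = real (card (Er n r :: (nat \<Rightarrow> 'a) set set))"
  have El: "?q ^ ((n - 1) * r) / ?q ^ (r * r) \<le> E" using Er_bounds(1)[OF rn', where 'a='a] by (simp add: E_def)
  have Bpos: "Bmax > 0" using q1 by (simp add: Bmax_def)
  have "?q ^ ((n - 1) * r) / ?q ^ (r * r) / Bmax \<le> real (KC TYPE('a) n r \<rho>)"
  proof -
    have "?q ^ ((n - 1) * r) / ?q ^ (r * r) \<le> real (KC TYPE('a) n r \<rho>) * Bmax"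
      using El KL(1) unfolding E_def by linarith
    thus ?thesis using Bpos by (simp add: divide_le_eq ac_simps)
  qed
  moreover have "?q ^ ((n - 1) * r) / ?q ^ (r * r) / Bmax =
     ?q ^ ((n - 1) * r + ((r + \<rho> - 1) * \<rho> + (r - 1) * r)) / ?q ^ (r * r + (n * \<rho> + (r + \<rho>) * r))"
    using q1 by (simp add: Bmax_def power_add field_simps)
  ultimately have "?q ^ ((n - 1) * r + ((r + \<rho> - 1) * \<rho> + (r - 1) * r)) / ?q ^ (r * r + (n * \<rho> + (r + \<rho>) * r))
     \<le> real (KC TYPE('a) n r \<rho>)" by simp
  from logq_ge[OF q1 _ this] KL(2)
  have "real ((n - 1) * r + ((r + \<rho> - 1) * \<rho> + (r - 1) * r)) - real (r * r + (n * \<rho> + (r + \<rho>) * r))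
     \<le> log ?q (real (KC TYPE('a) n r \<rho>))" by simp
  moreover have "real ((n - 1) * r + ((r + \<rho> - 1) * \<rho> + (r - 1) * r)) - real (r * r + (n * \<rho> + (r + \<rho>) * r))
     = real r * (real n - real r) - real \<rho> * (real n - real \<rho>) - 2 * real r - real \<rho>"
  proof -
    have d1: "real (r + \<rho> - 1) = real r + real \<rho> - 1" using r1 by simp
    have d2: "real (r - 1) = real r - 1" using r1 by simp
    have d3: "real (n - 1) = real n - 1" using r1 rn by simp
    show ?thesis unfolding of_nat_add of_nat_mult d1 d2 d3 by (simp add: algebra_simps)
  qed
  ultimately show ?thesis by simp
qed

lemma KC_log_upper:
  assumes r1: "1 \<le> r" and rr: "\<rho> \<le> r" and rn: "r + \<rho> \<le> n"
  shows "log (real CARD('a::{field,finite})) (real (KC TYPE('a) n r \<rho>))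
     \<le> real r * (real n - real r) - real \<rho> * (real n - real \<rho>) + 2 * real r + 2 * real n + 2"
proof -
  let ?q = "real CARD('a)"
  have q2: "?q \<ge> 2" using card_ge2[where 'a='a] by simp
  hence q1: "1 < ?q" by simp
  define L where "L = ?q ^ ((r - 1) * (r - \<rho>) + (n - 1) * \<rho>) / ?q ^ ((r - \<rho>) * (r - \<rho>) + r * \<rho>)"
  have bm: "L \<le> real (card (Bl n r \<rho> U))" if "U \<in> (Er n r :: (nat \<Rightarrow> 'a) set set)" for U
    using ball_lower[OF that rr rn] by (simp add: L_def power_add)
  have Lpos: "L > 0" using q1 by (simp add: L_def)
  have rn': "r \<le> n" using rn by simp
  define E where "E = real (card (Er n r :: (nat \<Rightarrow> 'a) set set))"
  have KU: "real (KC TYPE('a) n r \<rho>) \<le> E / L * (ln E + 1)"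
    using KC_upper[OF rn' Lpos bm] by (simp add: E_def)
  have Eu: "E \<le> ?q ^ (n * r) / ?q ^ ((r - 1) * r)" using Er_bounds(2)[OF rn', where 'a='a] by (simp add: E_def)
  have E1: "1 \<le> E"
  proof -
    have "Er n r \<noteq> ({} :: (nat \<Rightarrow> 'a) set set)" by (rule Er_nonempty[OF rn'])
    hence "card (Er n r :: (nat \<Rightarrow> 'a) set set) \<ge> 1" using Er_finite
      by (metis Suc_leI card_gt_0_iff One_nat_def)
    thus ?thesis by (simp add: E_def)
  qed
  have "?q ^ (n * r) / ?q ^ ((r - 1) * r) \<le> ?q ^ (n * r)" using q1 by (simp add: divide_le_eq)
  hence lnE: "ln E + 1 \<le> ?q ^ (2 * n + 2)" using lnE_bound[OF q2 E1 _ rn'] Eu by simp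
  have lnE0: "0 \<le> ln E + 1" using E1 by simp
  have "E / L * (ln E + 1) \<le> (?q ^ (n * r) / ?q ^ ((r - 1) * r)) / L * ?q ^ (2 * n + 2)"
    using Eu lnE lnE0 Lpos E1 by (intro mult_mono divide_right_mono) auto
  also have "\<dots> = ?q ^ (n * r + ((r - \<rho>) * (r - \<rho>) + r * \<rho>) + (2 * n + 2)) /
      ?q ^ ((r - 1) * r + ((r - 1) * (r - \<rho>) + (n - 1) * \<rho>))"
    using q1 by (simp add: L_def power_add field_simps)
  finally have le: "real (KC TYPE('a) n r \<rho>) \<le> \<dots>" using KU by linarith
  have Kpos: "0 < real (KC TYPE('a) n r \<rho>)"
  proof -
    have bmE: "real (card (Bl n r \<rho> U)) \<le> real (card (Er n r :: (nat \<Rightarrow> 'a) set set))"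
      if "U \<in> (Er n r :: (nat \<Rightarrow> 'a) set set)" for U
      by (intro of_nat_mono card_mono[OF Er_finite]) (auto simp: Bl_def)
    show ?thesis using KC_lower(2)[OF rn' bmE] by simp
  qed
  from logq_le[OF q1 Kpos le]
  have "log ?q (real (KC TYPE('a) n r \<rho>)) \<le> real (n * r + ((r - \<rho>) * (r - \<rho>) + r * \<rho>) + (2 * n + 2)) -
      real ((r - 1) * r + ((r - 1) * (r - \<rho>) + (n - 1) * \<rho>))" .
  moreover have "real (n * r + ((r - \<rho>) * (r - \<rho>) + r * \<rho>) + (2 * n + 2)) -
      real ((r - 1) * r + ((r - 1) * (r - \<rho>) + (n - 1) * \<rho>)) =
      real r * (real n - real r) - real \<rho> * (real n - real \<rho>) + 2 * real r + 2 * real n + 2"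
  proof -
    have d1: "real (r - \<rho>) = real r - real \<rho>" using rr by simp
    have d2: "real (r - 1) = real r - 1" using r1 by simp
    have d3: "real (n - 1) = real n - 1" using r1 rn by simp
    show ?thesis unfolding of_nat_add of_nat_mult d1 d2 d3 by (simp add: algebra_simps)
  qed
  ultimately show ?thesis by simp
qed



lemma floor_facts:
  fixes c :: real
  assumes c: "0 \<le> c"
  shows "real (nat \<lfloor>c * real n\<rfloor>) \<le> c * real n" "c * real n - 1 < real (nat \<lfloor>c * real n\<rfloor>)"
proof -
  have nn: "0 \<le> c * real n" using c by simp
  hence e: "real (nat \<lfloor>c * real n\<rfloor>) = real_of_int \<lfloor>c * real n\<rfloor>" by simp
  show "real (nat \<lfloor>c * real n\<rfloor>) \<le> c * real n" unfolding e by simp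
  show "c * real n - 1 < real (nat \<lfloor>c * real n\<rfloor>)" unfolding e by linarith
qed

lemma ratio_tendsto:
  fixes c :: real
  assumes c: "0 \<le> c"
  shows "(\<lambda>n. real (nat \<lfloor>c * real n\<rfloor>) / real n) \<longlonglongrightarrow> c"
proof (rule tendsto_sandwich[where f="\<lambda>n. c - 1 / real n" and h="\<lambda>n. c"])
  show "\<forall>\<^sub>F n in sequentially. c - 1 / real n \<le> real (nat \<lfloor>c * real n\<rfloor>) / real n"
    using eventually_ge_at_top[of "1::nat"]
  proof eventually_elim
    case (elim n)
    hence n: "real n > 0" by simp
    have "c * real n - 1 \<le> real (nat \<lfloor>c * real n\<rfloor>)" using floor_facts(2)[OF c, of n] by simp
    hence "(c * real n - 1) / real n \<le> real (nat \<lfloor>c * real n\<rfloor>) / real n" using n by (intro divide_right_mono) auto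
    moreover have "(c * real n - 1) / real n = c - 1 / real n" using n by (simp add: field_simps)
    ultimately show ?case by simp
  qed
  show "\<forall>\<^sub>F n in sequentially. real (nat \<lfloor>c * real n\<rfloor>) / real n \<le> c"
    using eventually_ge_at_top[of "1::nat"]
  proof eventually_elim
    case (elim n)
    hence n: "real n > 0" by simp
    thus ?case using floor_facts(1)[OF c, of n] by (simp add: field_simps)
  qed
  show "(\<lambda>n. c - 1 / real n) \<longlonglongrightarrow> c"
    using tendsto_diff[OF tendsto_const lim_1_over_n, of c] by simp
qed simp

theorem proposition11:
  fixes r' \<rho>' :: real
  assumes "0 \<le> \<rho>'" and "\<rho>' \<le> r'" and "r' \<le> 1/2" and "0 < r'"
  shows "liminf (\<lambda>n. ereal (
            log (real CARD('a::{field,finite}))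
                (real (KC TYPE('a) n (nat \<lfloor>r' * real n\<rfloor>) (nat \<lfloor>\<rho>' * real n\<rfloor>)))
            / log (real CARD('a))
                (gauss_binom CARD('a) n (nat \<lfloor>r' * real n\<rfloor>))))
         = ereal (1 - (\<rho>' * (1 - \<rho>')) / (r' * (1 - r')))"
proof -
  define rr where "rr n = nat \<lfloor>r' * real n\<rfloor>" for n
  define pp where "pp n = nat \<lfloor>\<rho>' * real n\<rfloor>" for n
  define LK where "LK n = log (real CARD('a)) (real (KC TYPE('a) n (rr n) (pp n)))" for n
  define LG where "LG n = log (real CARD('a)) (gauss_binom CARD('a) n (rr n))" for n
  define A where "A n = real (rr n) * (real n - real (rr n)) - real (pp n) * (real n - real (pp n))" for n
  define a where "a = r' * (1 - r') - \<rho>' * (1 - \<rho>')"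
  define b where "b = r' * (1 - r')"
  have r0: "0 \<le> r'" using assms by simp
  have b0: "b > 0" using assms by (simp add: b_def)
  have pr: "pp n \<le> rr n" for n
  proof -
    have "\<rho>' * real n \<le> r' * real n" using assms by (intro mult_right_mono) auto
    thus ?thesis unfolding pp_def rr_def by (intro nat_mono floor_mono)
  qed
  have rn: "rr n + pp n \<le> n" for n
  proof -
    have "real (rr n) \<le> r' * real n" using floor_facts(1)[OF r0] by (simp add: rr_def)
    also have "\<dots> \<le> real n / 2"
    proof -
      have "r' * 2 * real n \<le> 1 * real n" using assms by (intro mult_right_mono) auto
      thus ?thesis by simp
    qed
    finally have "real (rr n + rr n) \<le> real n" by simp
    hence "rr n + rr n \<le> n" by (simp only: of_nat_le_iff)
    thus ?thesis using pr[of n] by simp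
  qed
  have ev1: "\<forall>\<^sub>F n in sequentially. 1 \<le> rr n \<and> 1 \<le> n"
    using eventually_ge_at_top[of "nat \<lceil>2 / r'\<rceil>"]
  proof eventually_elim
    case (elim n)
    hence "2 / r' \<le> real n" by linarith
    hence "2 \<le> r' * real n" using assms by (simp add: field_simps)
    moreover have "r' * real n - 1 < real (rr n)" using floor_facts(2)[OF r0] by (simp add: rr_def)
    ultimately have "1 < real (rr n)" by linarith
    thus ?case using rn[of n] by simp
  qed
  have Rt: "(\<lambda>n. real (rr n) / real n) \<longlonglongrightarrow> r'" unfolding rr_def by (rule ratio_tendsto[OF r0])
  have Pt: "(\<lambda>n. real (pp n) / real n) \<longlonglongrightarrow> \<rho>'" unfolding pp_def by (rule ratio_tendsto) (use assms in simp)
  define R where "R n = real (rr n) / real n" for n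
  define P where "P n = real (pp n) / real n" for n
  have At: "(\<lambda>n. R n * (1 - R n) - P n * (1 - P n)) \<longlonglongrightarrow> a"
    unfolding a_def R_def P_def by (intro tendsto_intros Rt Pt)
  have Bt: "(\<lambda>n. R n * (1 - R n)) \<longlonglongrightarrow> b"
    unfolding b_def R_def by (intro tendsto_intros Rt)
  have e0: "(\<lambda>n. 6 * (1 / real n)) \<longlonglongrightarrow> 0"
    using tendsto_mult[OF tendsto_const lim_1_over_n, of "6::real"] by simp
  have Aeq: "A n / real n ^ 2 = R n * (1 - R n) - P n * (1 - P n)" if "1 \<le> n" for n
    using that by (simp add: A_def R_def P_def field_simps power2_eq_square)
  have Beq: "real (rr n) * (real n - real (rr n)) / real n ^ 2 = R n * (1 - R n)" if "1 \<le> n" for n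
    using that by (simp add: R_def field_simps power2_eq_square)
  have bndK: "\<forall>\<^sub>F n in sequentially. \<bar>LK n / real n ^ 2 - (R n * (1 - R n) - P n * (1 - P n))\<bar> \<le> 6 * (1 / real n)"
    using ev1
  proof eventually_elim
    case (elim n)
    hence r1: "1 \<le> rr n" and n1: "1 \<le> n" by auto
    have lo: "A n - 2 * real (rr n) - real (pp n) \<le> LK n"
      using KC_log_lower[OF r1 pr rn, where 'a='a] by (simp add: LK_def A_def)
    have up: "LK n \<le> A n + 2 * real (rr n) + 2 * real n + 2"
      using KC_log_upper[OF r1 pr rn, where 'a='a] by (simp add: LK_def A_def)
    have rle: "real (rr n) \<le> real n" "real (pp n) \<le> real n" using rn[of n] by auto
    have "\<bar>LK n - A n\<bar> \<le> 6 * real n" using lo up rle n1 unfolding abs_le_iff by linarith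
    hence "\<bar>LK n - A n\<bar> / real n ^ 2 \<le> 6 * real n / real n ^ 2" using n1 by (intro divide_right_mono) auto
    moreover have "\<bar>LK n - A n\<bar> / real n ^ 2 = \<bar>LK n / real n ^ 2 - A n / real n ^ 2\<bar>"
      by (simp add: diff_divide_distrib[symmetric] abs_divide)
    moreover have "6 * real n / real n ^ 2 = 6 * (1 / real n)" using n1 by (simp add: power2_eq_square)
    ultimately show ?case using Aeq[OF n1] by simp
  qed
  have bndG: "\<forall>\<^sub>F n in sequentially. \<bar>LG n / real n ^ 2 - R n * (1 - R n)\<bar> \<le> 6 * (1 / real n)"
    using ev1
  proof eventually_elim
    case (elim n)
    hence r1: "1 \<le> rr n" and n1: "1 \<le> n" by auto
    have rnn: "rr n \<le> n" using rn[of n] by simp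
    note g = gauss_bounds[OF r1 rnn, where 'a='a]
    have rle: "real (rr n) \<le> real n" using rnn by simp
    let ?B = "real (rr n) * (real n - real (rr n))"
    have "\<bar>LG n - ?B\<bar> \<le> 6 * real n" using g rle n1 unfolding LG_def abs_le_iff by linarith
    hence "\<bar>LG n - ?B\<bar> / real n ^ 2 \<le> 6 * real n / real n ^ 2" using n1 by (intro divide_right_mono) auto
    moreover have "\<bar>LG n - ?B\<bar> / real n ^ 2 = \<bar>LG n / real n ^ 2 - ?B / real n ^ 2\<bar>"
      by (simp add: diff_divide_distrib[symmetric] abs_divide)
    moreover have "6 * real n / real n ^ 2 = 6 * (1 / real n)" using n1 by (simp add: power2_eq_square)
    ultimately show ?case using Beq[OF n1] by simp
  qed
  have sandw: "g \<longlonglongrightarrow> c" if lim: "h \<longlonglongrightarrow> c" and bnd: "\<forall>\<^sub>F n in sequentially. \<bar>g n - h n\<bar> \<le> 6 * (1 / real n)"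
    for g h :: "nat \<Rightarrow> real" and c
  proof (rule tendsto_sandwich[where f="\<lambda>n. h n - 6 * (1 / real n)" and h="\<lambda>n. h n + 6 * (1 / real n)"])
    show "\<forall>\<^sub>F n in sequentially. h n - 6 * (1 / real n) \<le> g n" using bnd by eventually_elim (simp add: abs_le_iff)
    show "\<forall>\<^sub>F n in sequentially. g n \<le> h n + 6 * (1 / real n)" using bnd by eventually_elim (simp add: abs_le_iff)
    show "(\<lambda>n. h n - 6 * (1 / real n)) \<longlonglongrightarrow> c" using tendsto_diff[OF lim e0] by simp
    show "(\<lambda>n. h n + 6 * (1 / real n)) \<longlonglongrightarrow> c" using tendsto_add[OF lim e0] by simp
  qed
  have Kt: "(\<lambda>n. LK n / real n ^ 2) \<longlonglongrightarrow> a" by (rule sandw[OF At bndK])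
  have Gt: "(\<lambda>n. LG n / real n ^ 2) \<longlonglongrightarrow> b" by (rule sandw[OF Bt bndG])
  have Ft: "(\<lambda>n. (LK n / real n ^ 2) / (LG n / real n ^ 2)) \<longlonglongrightarrow> a / b"
    by (rule tendsto_divide[OF Kt Gt]) (use b0 in simp)
  have "(\<lambda>n. LK n / LG n) \<longlonglongrightarrow> a / b"
  proof (rule Lim_transform_eventually[OF Ft])
    show "\<forall>\<^sub>F n in sequentially. LK n / real n ^ 2 / (LG n / real n ^ 2) = LK n / LG n"
      using eventually_ge_at_top[of "1::nat"] by eventually_elim simp
  qed
  moreover have "a / b = 1 - (\<rho>' * (1 - \<rho>')) / (r' * (1 - r'))"
  proof -
    have "a / b = (b - \<rho>' * (1 - \<rho>')) / b" by (simp add: a_def b_def)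
    also have "\<dots> = 1 - (\<rho>' * (1 - \<rho>')) / b" using b0 by (simp add: diff_divide_distrib)
    finally show ?thesis by (simp add: b_def)
  qed
  ultimately have "(\<lambda>n. ereal (LK n / LG n)) \<longlonglongrightarrow> ereal (1 - (\<rho>' * (1 - \<rho>')) / (r' * (1 - r')))"
    by (intro tendsto_ereal) simp
  hence "liminf (\<lambda>n. ereal (LK n / LG n)) = ereal (1 - (\<rho>' * (1 - \<rho>')) / (r' * (1 - r')))"
    by (intro lim_imp_Liminf) simp_all
  thus ?thesis by (simp add: LK_def LG_def rr_def pp_def)
qed


end
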